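(* Let $\mathcal{M}=(S,P,E,s_{init},L)$ be a CTMC, let $\varepsilon,\delta,\varepsilon_1,\delta_1,\varepsilon_2,\delta_2\geq 0$, and let $s,s',s''\in S$. (1) The relation $\sim_{\varepsilon,\delta}$ is the largest $(\varepsilon,\delta)$-bisimulation on $\mathcal{M}$, i.e. it is itself an $(\varepsilon,\delta)$-bisimulation and contains every $(\varepsilon,\delta)$-bisimulation on $\mathcal{M}$. (2) If $s\sim_{\varepsilon_1,\delta_1}s'$ and $s'\sim_{\varepsilon_2,\delta_2}s''$, then $s\sim_{\varepsilon_1+\varepsilon_2,\,\delta_1+\delta_2}s''$. (3) $s\sim s'$ if and only if $s\sim_{0,0}s'$.
   Context: A CTMC is a tuple $\mathcal{M}=(S,P,E,s_{init},L)$ with $S$ a finite nonempty set of states, $P\colon S\to\mathrm{Distr}(S)$ a transition probability function (self-loops allowed; write $P(s,s')=P(s)(s')$ and $P(s,A)=\sum_{a\in A}P(s,a)$ for $A\subseteq S$), $E\colon S\to\mathbb{R}_{>0}$ an exit rate function, $s_{init}\in S$ an initial state, and $L\colon S\to 2^{AP}$ a labeling function. For a relation $R\subseteq S\times S$ and $A\subseteq S$ let $R(A)=\{t\in S\mid \exists s\in A: (s,t)\in R\}$. For $\varepsilon,\delta\geq 0$, a reflexive and symmetric relation $R\subseteq S\times S$ is an $(\varepsilon,\delta)$-bisimulation if for all $(s,s')\in R$: (i) $L(s)=L(s')$; (ii) $|\ln E(s)-\ln E(s')|\leq\delta$; (iii) for all $A\subseteq S$, $P(s,A)\leq P(s',R(A))+\varepsilon$.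 States are $(\varepsilon,\delta)$-bisimilar, written $s\sim_{\varepsilon,\delta}s'$, if some $(\varepsilon,\delta)$-bisimulation contains $(s,s')$. A strong bisimulation is an equivalence relation $R$ on $S$ such that for all $(s,s')\in R$: $L(s)=L(s')$, $E(s)=E(s')$, and $P(s,C)=P(s',C)$ for every equivalence class $C$ of $R$; $s\sim s'$ means some strong bisimulation contains $(s,s')$. *)

theory Defs
  imports Complex_Main
begin

definition ctmc :: "('s::finite \<Rightarrow> 's \<Rightarrow> real) \<Rightarrow> ('s \<Rightarrow> real) \<Rightarrow> 's \<Rightarrow> ('s \<Rightarrow> 'ap set) \<Rightarrow> bool" where
  "ctmc P E s_init L \<longleftrightarrow>
     (\<forall>s. (\<forall>t. 0 \<le> P s t) \<and> (\<Sum>t\<in>UNIV. P s t) = 1) \<and> (\<forall>s. 0 < E s)"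

definition Pset :: "('s \<Rightarrow> 's \<Rightarrow> real) \<Rightarrow> 's \<Rightarrow> 's set \<Rightarrow> real" where
  "Pset P s A = (\<Sum>a\<in>A. P s a)"

definition approx_bisim ::
  "('s::finite \<Rightarrow> 's \<Rightarrow> real) \<Rightarrow> ('s \<Rightarrow> real) \<Rightarrow> ('s \<Rightarrow> 'ap set) \<Rightarrow> real \<Rightarrow> real \<Rightarrow> ('s \<times> 's) set \<Rightarrow> bool" where
  "approx_bisim P E L \<epsilon> \<delta> R \<longleftrightarrow> refl R \<and> sym R \<and>
     (\<forall>(s, s') \<in> R. L s = L s' \<and> \<bar>ln (E s) - ln (E s')\<bar> \<le> \<delta> \<and>
        (\<forall>A. Pset P s A \<le> Pset P s' (R `` A) + \<epsilon>))"

definition approx_bisimilar ::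
  "('s::finite \<Rightarrow> 's \<Rightarrow> real) \<Rightarrow> ('s \<Rightarrow> real) \<Rightarrow> ('s \<Rightarrow> 'ap set) \<Rightarrow> real \<Rightarrow> real \<Rightarrow> 's \<Rightarrow> 's \<Rightarrow> bool" where
  "approx_bisimilar P E L \<epsilon> \<delta> s s' \<longleftrightarrow> (\<exists>R. approx_bisim P E L \<epsilon> \<delta> R \<and> (s, s') \<in> R)"

definition approx_bisimilarity ::
  "('s::finite \<Rightarrow> 's \<Rightarrow> real) \<Rightarrow> ('s \<Rightarrow> real) \<Rightarrow> ('s \<Rightarrow> 'ap set) \<Rightarrow> real \<Rightarrow> real \<Rightarrow> ('s \<times> 's) set" where
  "approx_bisimilarity P E L \<epsilon> \<delta> = {(s, s'). approx_bisimilar P E L \<epsilon> \<delta> s s'}"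

definition strong_bisim ::
  "('s::finite \<Rightarrow> 's \<Rightarrow> real) \<Rightarrow> ('s \<Rightarrow> real) \<Rightarrow> ('s \<Rightarrow> 'ap set) \<Rightarrow> ('s \<times> 's) set \<Rightarrow> bool" where
  "strong_bisim P E L R \<longleftrightarrow> equiv UNIV R \<and>
     (\<forall>(s, s') \<in> R. L s = L s' \<and> E s = E s' \<and>
        (\<forall>C \<in> UNIV // R. Pset P s C = Pset P s' C))"

definition strong_bisimilar ::
  "('s::finite \<Rightarrow> 's \<Rightarrow> real) \<Rightarrow> ('s \<Rightarrow> real) \<Rightarrow> ('s \<Rightarrow> 'ap set) \<Rightarrow> 's \<Rightarrow> 's \<Rightarrow> bool" where
  "strong_bisimilar P E L s s' \<longleftrightarrow> (\<exists>R. strong_bisim P E L R \<and> (s, s') \<in> R)"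

end

theory Submission
  imports Defs
begin

lemma Pset_mono:
  fixes P :: "'s::finite \<Rightarrow> 's \<Rightarrow> real"
  assumes "\<forall>s t. 0 \<le> P s t" "A \<subseteq> B"
  shows "Pset P s A \<le> Pset P s B"
  unfolding Pset_def using assms by (intro sum_mono2) auto

lemma Id_bisim:
  assumes "0 \<le> \<epsilon>" "0 \<le> \<delta>"
  shows "approx_bisim P E L \<epsilon> \<delta> Id"
  using assms unfolding approx_bisim_def by (auto simp: refl_on_def sym_def)

lemma part1:
  fixes P :: "'s::finite \<Rightarrow> 's \<Rightarrow> real"
  assumes nn: "\<forall>s t. 0 \<le> P s t" and e: "0 \<le> \<epsilon>" "0 \<le> \<delta>"
  shows "approx_bisim P E L \<epsilon> \<delta> (approx_bisimilarity P E L \<epsilon> \<delta>)"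
proof -
  let ?U = "approx_bisimilarity P E L \<epsilon> \<delta>"
  have r: "refl ?U" using Id_bisim[OF e, of P E L]
    unfolding refl_on_def approx_bisimilarity_def approx_bisimilar_def by blast
  have sy: "sym ?U"
    unfolding sym_def approx_bisimilarity_def approx_bisimilar_def approx_bisim_def by blast
  have "L s = L s' \<and> \<bar>ln (E s) - ln (E s')\<bar> \<le> \<delta> \<and> (\<forall>A. Pset P s A \<le> Pset P s' (?U `` A) + \<epsilon>)"
    if ss: "(s, s') \<in> ?U" for s s'
  proof -
    obtain R where R: "approx_bisim P E L \<epsilon> \<delta> R" "(s, s') \<in> R"
      using ss unfolding approx_bisimilarity_def approx_bisimilar_def by blast
    have sub: "R \<subseteq> ?U" using R(1) unfolding approx_bisimilarity_def approx_bisimilar_def by blast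
    have "Pset P s A \<le> Pset P s' (?U `` A) + \<epsilon>" for A
    proof -
      have "Pset P s A \<le> Pset P s' (R `` A) + \<epsilon>" using R unfolding approx_bisim_def by blast
      also have "Pset P s' (R `` A) \<le> Pset P s' (?U `` A)"
        using sub by (intro Pset_mono[OF nn]) blast
      finally show ?thesis by simp
    qed
    then show ?thesis using R unfolding approx_bisim_def by blast
  qed
  then show ?thesis using r sy unfolding approx_bisim_def by blast
qed

lemma part1b:
  "approx_bisim P E L \<epsilon> \<delta> R \<Longrightarrow> R \<subseteq> approx_bisimilarity P E L \<epsilon> \<delta>"
  unfolding approx_bisimilarity_def approx_bisimilar_def by blast

lemma comp_step:
  fixes P :: "'s::finite \<Rightarrow> 's \<Rightarrow> real"
  assumes nn: "\<forall>s t. 0 \<le> P s t"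
    and R1: "approx_bisim P E L \<epsilon>1 \<delta>1 R1" and R2: "approx_bisim P E L \<epsilon>2 \<delta>2 R2"
    and "(s, t) \<in> R1" "(t, u) \<in> R2" "R1 O R2 \<subseteq> R"
  shows "L s = L u \<and> \<bar>ln (E s) - ln (E u)\<bar> \<le> \<delta>1 + \<delta>2 \<and> (\<forall>A. Pset P s A \<le> Pset P u (R `` A) + (\<epsilon>1 + \<epsilon>2))"
proof -
  have a: "L s = L t" "\<bar>ln (E s) - ln (E t)\<bar> \<le> \<delta>1" "\<forall>A. Pset P s A \<le> Pset P t (R1 `` A) + \<epsilon>1"
    using R1 assms(4) unfolding approx_bisim_def by auto
  have b: "L t = L u" "\<bar>ln (E t) - ln (E u)\<bar> \<le> \<delta>2" "\<forall>A. Pset P t A \<le> Pset P u (R2 `` A) + \<epsilon>2"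
    using R2 assms(5) unfolding approx_bisim_def by auto
  have "Pset P s A \<le> Pset P u (R `` A) + (\<epsilon>1 + \<epsilon>2)" for A
  proof -
    have "Pset P s A \<le> Pset P t (R1 `` A) + \<epsilon>1" using a by blast
    also have "Pset P t (R1 `` A) \<le> Pset P u (R2 `` (R1 `` A)) + \<epsilon>2" using b by blast
    also have "Pset P u (R2 `` (R1 `` A)) \<le> Pset P u (R `` A)"
      using assms(6) by (intro Pset_mono[OF nn]) blast
    finally show ?thesis by simp
  qed
  then show ?thesis using a b by auto
qed

lemma part2:
  fixes P :: "'s::finite \<Rightarrow> 's \<Rightarrow> real"
  assumes nn: "\<forall>s t. 0 \<le> P s t"
  assumes "approx_bisimilar P E L \<epsilon>1 \<delta>1 s s'" "approx_bisimilar P E L \<epsilon>2 \<delta>2 s' s''"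
  shows "approx_bisimilar P E L (\<epsilon>1 + \<epsilon>2) (\<delta>1 + \<delta>2) s s''"
proof -
  obtain R1 where R1: "approx_bisim P E L \<epsilon>1 \<delta>1 R1" "(s, s') \<in> R1"
    using assms(2) unfolding approx_bisimilar_def by blast
  obtain R2 where R2: "approx_bisim P E L \<epsilon>2 \<delta>2 R2" "(s', s'') \<in> R2"
    using assms(3) unfolding approx_bisimilar_def by blast
  let ?R = "R1 O R2 \<union> R2 O R1"
  have rf: "refl R1" "refl R2" "sym R1" "sym R2" using R1 R2 unfolding approx_bisim_def by auto
  have "refl ?R" using rf unfolding refl_on_def by blast
  moreover have "sym ?R" using rf unfolding sym_def by blast
  moreover have "L x = L z \<and> \<bar>ln (E x) - ln (E z)\<bar> \<le> \<delta>1 + \<delta>2 \<and> (\<forall>A. Pset P x A \<le> Pset P z (?R `` A) + (\<epsilon>1 + \<epsilon>2))"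
    if "(x, z) \<in> ?R" for x z
    using that
  proof
    assume "(x, z) \<in> R1 O R2"
    then obtain y where "(x, y) \<in> R1" "(y, z) \<in> R2" by blast
    then show ?thesis using comp_step[OF nn R1(1) R2(1), of x y z ?R] by blast
  next
    assume "(x, z) \<in> R2 O R1"
    then obtain y where "(x, y) \<in> R2" "(y, z) \<in> R1" by blast
    then show ?thesis using comp_step[OF nn R2(1) R1(1), of x y z ?R] by (auto simp: add.commute)
  qed
  ultimately have "approx_bisim P E L (\<epsilon>1 + \<epsilon>2) (\<delta>1 + \<delta>2) ?R"
    unfolding approx_bisim_def by blast
  moreover have "(s, s'') \<in> ?R" using R1 R2 by blast
  ultimately show ?thesis unfolding approx_bisimilar_def by blast
qed

lemma strong_to_approx:
  fixes P :: "'s::finite \<Rightarrow> 's \<Rightarrow> real"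
  assumes nn: "\<forall>s t. 0 \<le> P s t" and "strong_bisimilar P E L s s'"
  shows "approx_bisimilar P E L 0 0 s s'"
proof -
  obtain R where R: "strong_bisim P E L R" "(s, s') \<in> R"
    using assms(2) unfolding strong_bisimilar_def by blast
  have eq: "equiv UNIV R" using R unfolding strong_bisim_def by blast
  have "Pset P x A \<le> Pset P z (R `` A)" if xz: "(x, z) \<in> R" for x z A
  proof -
    have cls: "\<forall>C \<in> UNIV // R. Pset P x C = Pset P z C"
      using R(1) xz unfolding strong_bisim_def by blast
    let ?K = "(\<lambda>a. R `` {a}) ` A"
    have U: "R `` A = \<Union>?K" by blast
    have K: "?K \<subseteq> UNIV // R" by (auto intro: quotientI)
    have disj: "\<forall>X\<in>?K. \<forall>Y\<in>?K. X \<noteq> Y \<longrightarrow> X \<inter> Y = {}"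
      using K quotient_disj[OF eq] by blast
    have sumK: "Pset P y (R `` A) = (\<Sum>C\<in>?K. Pset P y C)" for y
      unfolding U Pset_def using sum.Union_disjoint[of ?K "P y"] disj by simp
    have "A \<subseteq> R `` A" using eq unfolding equiv_def refl_on_def by blast
    then have "Pset P x A \<le> Pset P x (R `` A)" by (rule Pset_mono[OF nn])
    also have "\<dots> = Pset P z (R `` A)" unfolding sumK
      using cls K by (intro sum.cong) auto
    finally show ?thesis .
  qed
  then have "approx_bisim P E L 0 0 R"
    using R(1) unfolding approx_bisim_def strong_bisim_def equiv_def by auto
  then show ?thesis using R(2) unfolding approx_bisimilar_def by blast
qed

lemma approx_to_strong:
  fixes P :: "'s::finite \<Rightarrow> 's \<Rightarrow> real"
  assumes nn: "\<forall>s t. 0 \<le> P s t" and Epos: "\<forall>s. 0 < E s" and ab: "approx_bisimilar P E L 0 0 s s'"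
  shows "strong_bisimilar P E L s s'"
proof -
  obtain R where R: "approx_bisim P E L 0 0 R" "(s, s') \<in> R"
    using ab unfolding approx_bisimilar_def by blast
  have rf: "refl R" "sym R" using R unfolding approx_bisim_def by auto
  let ?Q = "R\<^sup>*"
  have eqQ: "equiv UNIV ?Q"
    unfolding equiv_def using refl_rtrancl[of R] sym_rtrancl[OF rf(2)] trans_rtrancl[of R] by simp
  have stp: "L x = L z \<and> E x = E z \<and> (\<forall>A. Pset P x A \<le> Pset P z (R `` A))" if xz: "(x, z) \<in> R" for x z
  proof -
    have h: "L x = L z" "\<bar>ln (E x) - ln (E z)\<bar> \<le> 0" "\<forall>A. Pset P x A \<le> Pset P z (R `` A) + 0"
      using R(1) xz unfolding approx_bisim_def by auto
    have "ln (E x) = ln (E z)" using h(2) by linarith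
    then have "E x = E z" using Epos by simp
    then show ?thesis using h by simp
  qed
  have clsR: "Pset P x C = Pset P z C" if xz: "(x, z) \<in> R" and Cq: "C \<in> UNIV // ?Q" for x z C
  proof -
    obtain w where Cw: "C = ?Q `` {w}" using Cq by (rule quotientE) simp
    have CC: "R `` C \<subseteq> C"
    proof
      fix b assume "b \<in> R `` C"
      then obtain a where "a \<in> C" "(a, b) \<in> R" by blast
      then have "(w, a) \<in> ?Q" "(a, b) \<in> R" using Cw by auto
      then have "(w, b) \<in> ?Q" by (rule rtrancl_into_rtrancl)
      then show "b \<in> C" using Cw by simp
    qed
    have le: "Pset P a C \<le> Pset P b C" if ab2: "(a, b) \<in> R" for a b
    proof -
      have "Pset P a C \<le> Pset P b (R `` C)" using stp[OF ab2] by blast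
      also have "\<dots> \<le> Pset P b C" using CC by (rule Pset_mono[OF nn])
      finally show ?thesis .
    qed
    have zx: "(z, x) \<in> R" using rf(2) xz unfolding sym_def by blast
    show ?thesis using le[OF xz] le[OF zx] by linarith
  qed
  have "L x = L z \<and> E x = E z \<and> (\<forall>C \<in> UNIV // ?Q. Pset P x C = Pset P z C)" if "(x, z) \<in> ?Q" for x z
    using that
  proof (induction rule: rtrancl_induct)
    case base then show ?case by simp
  next
    case (step y z)
    have a: "L y = L z" "E y = E z" using stp[OF step(2)] by auto
    have b: "\<forall>C \<in> UNIV // ?Q. Pset P y C = Pset P z C" using clsR[OF step(2)] by blast
    show ?case using step(3) a b by simp
  qed
  then have "strong_bisim P E L ?Q" unfolding strong_bisim_def using eqQ by blast
  then show ?thesis unfolding strong_bisimilar_def using R(2) by blast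
qed

theorem theorem2:
  fixes P :: "'s::finite \<Rightarrow> 's \<Rightarrow> real" and E :: "'s \<Rightarrow> real" and s_init :: 's
    and L :: "'s \<Rightarrow> 'ap set"
    and \<epsilon> \<delta> \<epsilon>1 \<delta>1 \<epsilon>2 \<delta>2 :: real and s s' s'' :: 's
  assumes "ctmc P E s_init L"
    and "0 \<le> \<epsilon>" "0 \<le> \<delta>" "0 \<le> \<epsilon>1" "0 \<le> \<delta>1" "0 \<le> \<epsilon>2" "0 \<le> \<delta>2"
  shows "(approx_bisim P E L \<epsilon> \<delta> (approx_bisimilarity P E L \<epsilon> \<delta>) \<and>
         (\<forall>R. approx_bisim P E L \<epsilon> \<delta> R \<longrightarrow> R \<subseteq> approx_bisimilarity P E L \<epsilon> \<delta>)) \<and>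
         (approx_bisimilar P E L \<epsilon>1 \<delta>1 s s' \<and> approx_bisimilar P E L \<epsilon>2 \<delta>2 s' s''
           \<longrightarrow> approx_bisimilar P E L (\<epsilon>1 + \<epsilon>2) (\<delta>1 + \<delta>2) s s'') \<and>
         (strong_bisimilar P E L s s' \<longleftrightarrow> approx_bisimilar P E L 0 0 s s')"
proof -
  have nn: "\<forall>s t. 0 \<le> P s t" and Epos: "\<forall>s. 0 < E s"
    using assms(1) unfolding ctmc_def by auto
  have c1: "approx_bisim P E L \<epsilon> \<delta> (approx_bisimilarity P E L \<epsilon> \<delta>)"
    by (rule part1[OF nn assms(2,3)])
  have c2: "\<forall>R. approx_bisim P E L \<epsilon> \<delta> R \<longrightarrow> R \<subseteq> approx_bisimilarity P E L \<epsilon> \<delta>"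
    using part1b by blast
  have c3: "approx_bisimilar P E L \<epsilon>1 \<delta>1 s s' \<and> approx_bisimilar P E L \<epsilon>2 \<delta>2 s' s''
           \<longrightarrow> approx_bisimilar P E L (\<epsilon>1 + \<epsilon>2) (\<delta>1 + \<delta>2) s s''"
    using part2[OF nn] by blast
  have c4: "strong_bisimilar P E L s s' \<longleftrightarrow> approx_bisimilar P E L 0 0 s s'"
    using strong_to_approx[OF nn] approx_to_strong[OF nn Epos] by blast
  show ?thesis using c1 c2 c3 c4 by (intro conjI)
qed

end
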